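(* Let $q$ be a prime power, $n\ge 2$, $\lambda$ a nontrivial additive character of $\mathbb{F}_q$, and $x\in\mathbb{F}_q^*$. Then \[ q^{\binom n2}\sum_{\alpha_1,\ldots,\alpha_{n-1}\in\mathbb{F}_q^*}\lambda\!\left(\alpha_1+\cdots+\alpha_{n-1}+\frac{x}{\alpha_1\cdots\alpha_{n-1}}\right) = \sum_{\substack{g\in GL(n,q)\\ \det g = x}}\lambda(\operatorname{tr} g). \]
   Context: $GL(n,q)$ is the group of invertible $n\times n$ matrices over $\mathbb{F}_q$. *)

theory Defs
  imports Complex_Main "HOL-Library.FuncSet" "Jordan_Normal_Form.Determinant"
begin

definition additive_character :: "('a::field \<Rightarrow> complex) \<Rightarrow> bool" where
  "additive_character chi \<longleftrightarrow> (\<forall>a. chi a \<noteq> 0) \<and> (\<forall>a b. chi (a + b) = chi a * chi b)"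

definition nontrivial_character :: "('a::field \<Rightarrow> complex) \<Rightarrow> bool" where
  "nontrivial_character chi \<longleftrightarrow> (\<exists>a. chi a \<noteq> 1)"

definition mat_trace :: "'a::comm_ring_1 mat \<Rightarrow> 'a" where
  "mat_trace A = (\<Sum>i<dim_row A. A $$ (i, i))"

end

theory Submission
  imports Defs
begin
lemma finite_carrier_mat: "finite (carrier_mat n m :: 'a::finite mat set)"
proof -
  have "carrier_mat n m \<subseteq> (\<lambda>f. mat n m f) ` (Pi\<^sub>E ({..<n}\<times>{..<m}) (\<lambda>_. UNIV :: 'a set))"
  proof
    fix A :: "'a mat" assume A: "A \<in> carrier_mat n m"
    have "A = mat n m (restrict (\<lambda>ij. A $$ ij) ({..<n}\<times>{..<m}))"
      apply (rule eq_matI) using A by simp_all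
    moreover have "restrict (\<lambda>ij. A $$ ij) ({..<n}\<times>{..<m}) \<in> Pi\<^sub>E ({..<n}\<times>{..<m}) (\<lambda>_. UNIV :: 'a set)"
      by simp
    ultimately show "A \<in> (\<lambda>f. mat n m f) ` (Pi\<^sub>E ({..<n}\<times>{..<m}) (\<lambda>_. UNIV))" by (rule image_eqI)
  qed
  moreover have "finite ((\<lambda>f. mat n m f) ` (Pi\<^sub>E ({..<n}\<times>{..<m}) (\<lambda>_. UNIV :: 'a set)))"
    by (rule finite_imageI, rule finite_PiE) auto
  ultimately show ?thesis by (rule finite_subset)
qed

lemma shift_sum_zero:
  fixes F :: "'b \<Rightarrow> complex"
  assumes "finite S" "h ` S \<subseteq> S" "inj_on h S" "\<And>s. s \<in> S \<Longrightarrow> F (h s) = w * F s" "w \<noteq> 1"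
  shows "sum F S = 0"
proof -
  have hS: "h ` S = S" using endo_inj_surj assms by blast
  have "sum F S = sum F (h ` S)" using hS by simp
  also have "\<dots> = sum (F \<circ> h) S" using assms(3) by (rule sum.reindex)
  also have "\<dots> = w * sum F S" by (simp add: sum_distrib_left assms(4))
  finally have "(1 - w) * sum F S = 0" by (simp add: algebra_simps)
  thus ?thesis using assms(5) by simp
qed

lemma chi_zero: "additive_character chi \<Longrightarrow> chi 0 = 1"
  unfolding additive_character_def
  by (metis add.right_neutral mult_cancel_left2)

lemma chi_add: "additive_character chi \<Longrightarrow> chi (a + b) = chi a * chi b"
  unfolding additive_character_def by blast

lemma chi_sum_zero:
  fixes chi :: "'a::{field,finite} \<Rightarrow> complex"
  assumes "additive_character chi" "nontrivial_character chi"
  shows "(\<Sum>t\<in>UNIV. chi t) = 0"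
proof -
  obtain a where a: "chi a \<noteq> 1" using assms(2) unfolding nontrivial_character_def by blast
  show ?thesis
    by (rule shift_sum_zero[where h="\<lambda>t. t + a" and w="chi a"])
       (auto simp: chi_add[OF assms(1)] a)
qed
lemma sum_if_single: "j0 < (n::nat) \<Longrightarrow> (\<Sum>j<n. if j = j0 then X else 0) = (X::'b::comm_monoid_add)"
  by (simp add: sum.delta)

lemma chi_lin_sum_zero:
  fixes chi :: "'a::{field,finite} \<Rightarrow> complex" and n :: nat and v :: "nat \<Rightarrow> 'a"
  assumes "additive_character chi" "nontrivial_character chi" "j0 < n" "v j0 \<noteq> 0"
  shows "(\<Sum>c\<in>Pi\<^sub>E {..<n} (\<lambda>_. UNIV). chi (\<Sum>j<n. c j * v j)) = 0"
proof -
  obtain a where a: "chi a \<noteq> 1" using assms(2) unfolding nontrivial_character_def by blast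
  define t where "t = a / v j0"
  have key: "(\<Sum>j<n. (c(j0 := c j0 + t)) j * v j) = (\<Sum>j<n. c j * v j) + a" for c
  proof -
    have "(\<Sum>j<n. (c(j0 := c j0 + t)) j * v j) = (\<Sum>j<n. c j * v j + (if j = j0 then t * v j0 else 0))"
    proof (rule sum.cong[OF refl])
      fix j
      show "(c(j0 := c j0 + t)) j * v j = c j * v j + (if j = j0 then t * v j0 else 0)"
        by (cases "j = j0") (simp_all add: distrib_right)
    qed
    also have "\<dots> = (\<Sum>j<n. c j * v j) + t * v j0" by (simp only: sum.distrib sum_if_single[OF assms(3)])
    finally show ?thesis using assms(4) by (simp add: t_def)
  qed
  show ?thesis
  proof (rule shift_sum_zero[where h="\<lambda>c. c(j0 := c j0 + t)" and w="chi a"])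
    show "finite (Pi\<^sub>E {..<n} (\<lambda>_. UNIV :: 'a set))" by (simp add: finite_PiE)
    show "(\<lambda>c. c(j0 := c j0 + t)) ` Pi\<^sub>E {..<n} (\<lambda>_. UNIV) \<subseteq> Pi\<^sub>E {..<n} (\<lambda>_. UNIV)"
    proof (rule image_subsetI)
      fix c :: "nat \<Rightarrow> 'a" assume c: "c \<in> Pi\<^sub>E {..<n} (\<lambda>_. UNIV)"
      have "c i = undefined" if "i \<notin> {..<n}" for i using c that by (simp add: PiE_iff extensional_def)
      then have "(c(j0 := c j0 + t)) i = undefined" if "i \<notin> {..<n}" for i
        using that assms(3) by (cases "i = j0") simp_all
      then show "c(j0 := c j0 + t) \<in> Pi\<^sub>E {..<n} (\<lambda>_. UNIV)"
        by (simp add: PiE_iff extensional_def)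
    qed
    show "inj_on (\<lambda>c. c(j0 := c j0 + t)) (Pi\<^sub>E {..<n} (\<lambda>_. UNIV))"
    proof (rule inj_onI)
      fix c c' assume eq: "c(j0 := c j0 + t) = c'(j0 := c' j0 + t)"
      show "c = c'"
      proof
        fix j
        have "(c(j0 := c j0 + t)) j = (c'(j0 := c' j0 + t)) j" using eq by simp
        then show "c j = c' j" by (cases "j = j0") simp_all
      qed
    qed
    show "chi (\<Sum>j<n. (c(j0 := c j0 + t)) j * v j) = chi a * chi (\<Sum>j<n. c j * v j)" for c
      unfolding key chi_add[OF assms(1)] by (rule mult.commute)
  qed (rule a)
qed

definition colm :: "nat \<Rightarrow> (nat \<Rightarrow> 'a) \<Rightarrow> 'a mat" where "colm n b = mat n 1 (\<lambda>(i,_). b i)"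
definition rowm :: "nat \<Rightarrow> (nat \<Rightarrow> 'a) \<Rightarrow> 'a mat" where "rowm n c = mat 1 n (\<lambda>(_,j). c j)"
definition blk :: "nat \<Rightarrow> 'a mat \<Rightarrow> (nat \<Rightarrow> 'a) \<Rightarrow> (nat \<Rightarrow> 'a) \<Rightarrow> 'a \<Rightarrow> 'a mat" where
  "blk n A b c d = four_block_mat A (colm n b) (rowm n c) (mat 1 1 (\<lambda>_. d))"

lemma colm_carrier[simp]: "colm n b \<in> carrier_mat n 1" by (simp add: colm_def)
lemma colm_carrier1[simp]: "colm n b \<in> carrier_mat n (Suc 0)" by (simp add: colm_def)
lemma rowm_carrier1[simp]: "rowm n c \<in> carrier_mat (Suc 0) n" by (simp add: rowm_def)
lemma rowm_carrier[simp]: "rowm n c \<in> carrier_mat 1 n" by (simp add: rowm_def)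

lemma blk_carrier: "A \<in> carrier_mat n n \<Longrightarrow> blk n A b c d \<in> carrier_mat (Suc n) (Suc n)"
  unfolding blk_def using four_block_carrier_mat[of A n n "mat 1 1 (\<lambda>_. d)" 1 1] by simp

lemma blk_dims[simp]: "A \<in> carrier_mat n n \<Longrightarrow> dim_row (blk n A b c d) = Suc n"
  "A \<in> carrier_mat n n \<Longrightarrow> dim_col (blk n A b c d) = Suc n"
  using blk_carrier[of A n b c d] by auto

lemma blk_index: assumes A: "A \<in> carrier_mat n n" and i: "i < Suc n" and j: "j < Suc n"
  shows "blk n A b c d $$ (i,j) = (if i < n then if j < n then A $$ (i,j) else b i
     else if j < n then c j else d)"
proof -
  have dA: "dim_row A = n" "dim_col A = n" using A by auto
  show ?thesis unfolding blk_def
    using i j by (simp add: dA colm_def rowm_def)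
qed

lemma blk_A[simp]: "A \<in> carrier_mat n n \<Longrightarrow> i < n \<Longrightarrow> j < n \<Longrightarrow> blk n A b c d $$ (i,j) = A $$ (i,j)"
  by (simp add: blk_index)
lemma blk_b[simp]: "A \<in> carrier_mat n n \<Longrightarrow> i < n \<Longrightarrow> blk n A b c d $$ (i,n) = b i"
  by (simp add: blk_index)
lemma blk_c[simp]: "A \<in> carrier_mat n n \<Longrightarrow> j < n \<Longrightarrow> blk n A b c d $$ (n,j) = c j"
  by (simp add: blk_index)
lemma blk_d[simp]: "A \<in> carrier_mat n n \<Longrightarrow> blk n A b c d $$ (n,n) = d"
  by (simp add: blk_index)

lemma blk_trace: assumes A: "A \<in> carrier_mat n n"
  shows "mat_trace (blk n A b c d) = mat_trace A + d"
proof -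
  have "mat_trace (blk n A b c d) = (\<Sum>i<Suc n. blk n A b c d $$ (i,i))"
    unfolding mat_trace_def using A by simp
  also have "\<dots> = (\<Sum>i<n. blk n A b c d $$ (i,i)) + d"
    using A by simp
  also have "(\<Sum>i<n. blk n A b c d $$ (i,i)) = (\<Sum>i<n. A $$ (i,i))"
    by (rule sum.cong) (use A in simp_all)
  finally show ?thesis unfolding mat_trace_def using A by simp
qed

definition unblk :: "nat \<Rightarrow> 'a mat \<Rightarrow> 'a mat \<times> (nat \<Rightarrow> 'a) \<times> (nat \<Rightarrow> 'a) \<times> 'a" where
  "unblk n g = (mat n n (\<lambda>ij. g $$ ij), restrict (\<lambda>i. g $$ (i,n)) {..<n},
      restrict (\<lambda>j. g $$ (n,j)) {..<n}, g $$ (n,n))"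

definition blkT :: "nat \<Rightarrow> ('a mat \<times> (nat \<Rightarrow> 'a) \<times> (nat \<Rightarrow> 'a) \<times> 'a) set" where
  "blkT n = carrier_mat n n \<times> Pi\<^sub>E {..<n} (\<lambda>_. UNIV) \<times> Pi\<^sub>E {..<n} (\<lambda>_. UNIV) \<times> UNIV"

lemma blk_bij: "bij_betw (\<lambda>(A,b,c,d). blk n A b c d) (blkT n) (carrier_mat (Suc n) (Suc n))"
proof (rule bij_betw_byWitness[where f'="unblk n"])
  show "\<forall>a\<in>blkT n. unblk n (case a of (A, b, c, d) \<Rightarrow> blk n A b c d) = a"
  proof
    fix a assume a: "a \<in> blkT n"
    obtain A b c d where abcd: "a = (A,b,c,d)" by (cases a) auto
    have A: "A \<in> carrier_mat n n" and b: "b \<in> Pi\<^sub>E {..<n} (\<lambda>_. UNIV)"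
      and c: "c \<in> Pi\<^sub>E {..<n} (\<lambda>_. UNIV)" using a abcd by (auto simp: blkT_def)
    have 1: "mat n n (\<lambda>ij. blk n A b c d $$ ij) = A"
      by (rule eq_matI) (use A in simp_all)
    have 2: "restrict (\<lambda>i. blk n A b c d $$ (i,n)) {..<n} = b"
    proof
      fix i show "restrict (\<lambda>i. blk n A b c d $$ (i,n)) {..<n} i = b i"
        using b A by (cases "i < n") (simp_all add: PiE_iff extensional_def)
    qed
    have 3: "restrict (\<lambda>j. blk n A b c d $$ (n,j)) {..<n} = c"
    proof
      fix i show "restrict (\<lambda>j. blk n A b c d $$ (n,j)) {..<n} i = c i"
        using c A by (cases "i < n") (simp_all add: PiE_iff extensional_def)
    qed
    show "unblk n (case a of (A, b, c, d) \<Rightarrow> blk n A b c d) = a"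
      unfolding abcd unblk_def using 1 2 3 A by simp
  qed
  show "\<forall>a'\<in>carrier_mat (Suc n) (Suc n). (case unblk n a' of (A, b, c, d) \<Rightarrow> blk n A b c d) = a'"
  proof
    fix g assume g: "g \<in> carrier_mat (Suc n) (Suc n)"
    have Ac: "mat n n (\<lambda>ij. g $$ ij) \<in> carrier_mat n n" by simp
    show "(case unblk n g of (A, b, c, d) \<Rightarrow> blk n A b c d) = g"
      unfolding unblk_def prod.case
    proof (rule eq_matI)
      fix i j assume i: "i < dim_row g" and j: "j < dim_col g"
      have i': "i < n \<or> i = n" and j': "j < n \<or> j = n" using i j g by auto
      show "blk n (mat n n (($$) g)) (restrict (\<lambda>i. g $$ (i, n)) {..<n})
          (restrict (\<lambda>j. g $$ (n, j)) {..<n}) (g $$ (n, n)) $$ (i, j) = g $$ (i, j)"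
        using i' j' Ac by (elim disjE) simp_all
    qed (use g Ac in simp_all)
  qed
  show "(\<lambda>(A, b, c, d). blk n A b c d) ` blkT n \<subseteq> carrier_mat (Suc n) (Suc n)"
  proof
    fix y assume "y \<in> (\<lambda>(A, b, c, d). blk n A b c d) ` blkT n"
    then obtain a where a: "a \<in> blkT n" "y = (\<lambda>(A, b, c, d). blk n A b c d) a" by (rule imageE)
    obtain A b c d where abcd: "a = (A,b,c,d)" by (cases a) auto
    have "y = blk n A b c d" "A \<in> carrier_mat n n" using a abcd by (auto simp: blkT_def)
    then show "y \<in> carrier_mat (Suc n) (Suc n)" by (simp add: blk_carrier)
  qed
  show "unblk n ` carrier_mat (Suc n) (Suc n) \<subseteq> blkT n"
  proof
    fix y assume "y \<in> unblk n ` carrier_mat (Suc n) (Suc n)"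
    then obtain g where "y = unblk n g" by blast
    then show "y \<in> blkT n" unfolding blkT_def unblk_def by simp
  qed
qed

lemma blk_det_affine: assumes A: "A \<in> carrier_mat n n"
  shows "det (blk n A b c d) = det (blk n A b c 0) + d * det A"
proof -
  define M where "M = blk n A b c d"
  define M0 where "M0 = blk n A b c 0"
  have dA: "dim_row A = n" "dim_col A = n" using A by auto
  have del: "mat_delete M n j = mat_delete M0 n j" if j: "j < n" for j
    unfolding mat_delete_def
  proof (rule eq_matI)
    fix i' j' assume i': "i' < dim_row (mat (dim_row M0 - 1) (dim_col M0 - 1)
          (\<lambda>(i', j'). M0 $$ (if i' < n then i' else Suc i', if j' < j then j' else Suc j')))"
      and j': "j' < dim_col (mat (dim_row M0 - 1) (dim_col M0 - 1)
          (\<lambda>(i', j'). M0 $$ (if i' < n then i' else Suc i', if j' < j then j' else Suc j')))"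
    have i'n: "i' < n" and j'n: "j' < n" using i' j' A by (auto simp: M0_def)
    show "mat (dim_row M - 1) (dim_col M - 1)
          (\<lambda>(i', j'). M $$ (if i' < n then i' else Suc i', if j' < j then j' else Suc j')) $$ (i', j') =
          mat (dim_row M0 - 1) (dim_col M0 - 1)
          (\<lambda>(i', j'). M0 $$ (if i' < n then i' else Suc i', if j' < j then j' else Suc j')) $$ (i', j')"
      using i'n j'n A by (simp add: blk_index M_def M0_def)
  qed (use A in \<open>simp_all add: M_def M0_def\<close>)
  have lap: "det (blk n A b c e) = (\<Sum>j<n. c j * cofactor (blk n A b c e) n j) + e * det A" for e
  proof -
    have "det (blk n A b c e) = (\<Sum>j<Suc n. blk n A b c e $$ (n,j) * cofactor (blk n A b c e) n j)"
      by (rule laplace_expansion_row[OF blk_carrier[OF A]]) simp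
    also have "\<dots> = (\<Sum>j<n. c j * cofactor (blk n A b c e) n j) + e * cofactor (blk n A b c e) n n"
      using A by simp
    also have "cofactor (blk n A b c e) n n = det A"
    proof -
      have "mat_delete (blk n A b c e) n n = A"
        by (rule eq_matI, use A in \<open>simp_all add: mat_delete_def\<close>)
      moreover have "(-1::'a)^(n+n) = 1" by (simp add: mult_2[symmetric])
      ultimately show ?thesis unfolding cofactor_def by simp
    qed
    finally show ?thesis .
  qed
  have sumeq: "(\<Sum>j<n. c j * cofactor M n j) = (\<Sum>j<n. c j * cofactor M0 n j)"
  proof (rule sum.cong[OF refl])
    fix j assume "j \<in> {..<n}"
    then have "mat_delete M n j = mat_delete M0 n j" using del by simp
    then show "c j * cofactor M n j = c j * cofactor M0 n j" unfolding cofactor_def by simp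
  qed
  have l1: "det M = (\<Sum>j<n. c j * cofactor M n j) + d * det A" unfolding M_def by (rule lap)
  have l0: "det M0 = (\<Sum>j<n. c j * cofactor M0 n j) + 0 * det A" unfolding M0_def by (rule lap)
  show ?thesis unfolding M_def[symmetric] M0_def[symmetric] using l1 l0 sumeq by simp
qed

lemma A_bp: fixes A :: "'a::field mat" assumes A: "A \<in> carrier_mat n n" and Ai: "Ai \<in> carrier_mat n n"
  and inv: "A * Ai = 1\<^sub>m n" and i: "i < n"
  shows "(\<Sum>k<n. A $$ (i,k) * (\<Sum>l<n. Ai $$ (k,l) * b l)) = b i"
proof -
  have "(\<Sum>k<n. A $$ (i,k) * (\<Sum>l<n. Ai $$ (k,l) * b l)) = (\<Sum>k<n. \<Sum>l<n. A $$ (i,k) * (Ai $$ (k,l) * b l))"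
    by (simp only: sum_distrib_left)
  also have "\<dots> = (\<Sum>l<n. \<Sum>k<n. A $$ (i,k) * (Ai $$ (k,l) * b l))" by (rule sum.swap)
  also have "\<dots> = (\<Sum>l<n. (\<Sum>k<n. A $$ (i,k) * Ai $$ (k,l)) * b l)"
    by (simp only: sum_distrib_right mult.assoc)
  also have "\<dots> = (\<Sum>l<n. (A * Ai) $$ (i,l) * b l)"
    by (rule sum.cong) (use A Ai i in \<open>simp_all add: scalar_prod_def atLeast0LessThan\<close>)
  also have "\<dots> = (\<Sum>l<n. (if i = l then b l else 0))"
    by (rule sum.cong) (use i in \<open>simp_all add: inv\<close>)
  also have "\<dots> = b i" using i by simp
  finally show ?thesis .
qed

lemma mult_entry: assumes X: "X \<in> carrier_mat nr m" and Y: "Y \<in> carrier_mat m nc"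
  and i: "i < nr" and j: "j < nc"
  shows "(X * Y) $$ (i,j) = (\<Sum>k<m. X $$ (i,k) * Y $$ (k,j))"
proof -
  have "(X * Y) $$ (i,j) = row X i \<bullet> col Y j" using X Y i j by (simp add: index_mult_mat)
  also have "\<dots> = (\<Sum>k\<in>{0..<m}. row X i $ k * col Y j $ k)" using Y by (simp add: scalar_prod_def)
  also have "\<dots> = (\<Sum>k<m. X $$ (i,k) * Y $$ (k,j))"
    by (rule sum.cong) (use X Y i j in auto)
  finally show ?thesis .
qed

lemma inv_exists: fixes A :: "'a::field mat"
  assumes A: "A \<in> carrier_mat n n" and d: "det A \<noteq> 0"
  shows "\<exists>Ai \<in> carrier_mat n n. A * Ai = 1\<^sub>m n \<and> Ai * A = 1\<^sub>m n"
proof -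
  have "A \<in> Units (ring_mat TYPE('a) n undefined)" by (rule det_non_zero_imp_unit[OF A d])
  then show ?thesis by (auto simp: Units_def ring_mat_def)
qed

lemma det_invertible: fixes A :: "'a::field mat"
  assumes A: "A \<in> carrier_mat n n" and d: "det A \<noteq> 0"
  shows "invertible_mat A"
proof -
  obtain Ai where Ai: "Ai \<in> carrier_mat n n" "A * Ai = 1\<^sub>m n" "Ai * A = 1\<^sub>m n"
    using inv_exists[OF A d] by blast
  show ?thesis unfolding invertible_mat_def inverts_mat_def
    using A Ai by (auto simp: square_mat.simps)
qed

lemma schur: fixes A :: "'a::field mat"
  assumes A: "A \<in> carrier_mat n n" and Ai: "Ai \<in> carrier_mat n n" and inv: "A * Ai = 1\<^sub>m n"
  shows "det (blk n A b c 0) = - det A * (\<Sum>j<n. c j * (\<Sum>l<n. Ai $$ (j,l) * b l))"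
proof -
  define bp where "bp j = (\<Sum>l<n. Ai $$ (j,l) * b l)" for j
  define s where "s = (\<Sum>j<n. c j * bp j)"
  define N where "N = four_block_mat (1\<^sub>m n) (colm n (\<lambda>j. - bp j)) (0\<^sub>m 1 n) (1\<^sub>m 1)"
  define T where "T = four_block_mat A (0\<^sub>m n 1) (rowm n c) (mat 1 1 (\<lambda>_. - s))"
  have Nc: "N \<in> carrier_mat (Suc n) (Suc n)" unfolding N_def
    using four_block_carrier_mat[of "1\<^sub>m n" n n "1\<^sub>m 1" 1 1] by simp
  have detN: "det N = 1" unfolding N_def
    by (subst det_four_block_mat_lower_left_zero[of _ n _ 1]) auto
  have Abp: "(\<Sum>k<n. A $$ (i,k) * bp k) = b i" if "i < n" for i
    unfolding bp_def by (rule A_bp[OF A Ai inv that])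
  have g1: "A * 1\<^sub>m n + colm n b * 0\<^sub>m 1 n = A"
    by (rule eq_matI) (use A in \<open>simp_all add: colm_def\<close>)
  have g2: "A * colm n (\<lambda>j. - bp j) + colm n b * 1\<^sub>m 1 = 0\<^sub>m n 1"
  proof (rule eq_matI)
    fix i j assume i: "i < dim_row (0\<^sub>m n 1 :: 'a mat)" and j: "j < dim_col (0\<^sub>m n 1 :: 'a mat)"
    have i': "i < n" and j': "j = 0" using i j by auto
    have "(A * colm n (\<lambda>j. - bp j)) $$ (i,j) = (\<Sum>k<n. A $$ (i,k) * colm n (\<lambda>j. - bp j) $$ (k,j))"
      by (rule mult_entry[OF A colm_carrier i']) (use j' in simp)
    also have "\<dots> = - (\<Sum>k<n. A $$ (i,k) * bp k)"
      by (simp add: colm_def j' sum_negf[symmetric])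
    also have "\<dots> = - b i" using Abp[OF i'] by simp
    finally show "(A * colm n (\<lambda>j. - bp j) + colm n b * 1\<^sub>m 1) $$ (i, j) = 0\<^sub>m n 1 $$ (i, j)"
      using i' j' A by (simp add: colm_def)
  qed (use A in \<open>simp_all add: colm_def\<close>)
  have g3: "rowm n c * 1\<^sub>m n + mat 1 1 (\<lambda>_. 0) * 0\<^sub>m 1 n = rowm n c"
    by (rule eq_matI) (simp_all add: rowm_def)
  have g4: "rowm n c * colm n (\<lambda>j. - bp j) + mat 1 1 (\<lambda>_. 0) * 1\<^sub>m 1 = mat 1 1 (\<lambda>_. - s)"
  proof (rule eq_matI)
    fix i j assume i: "i < dim_row (mat 1 1 (\<lambda>_. - s) :: 'a mat)" and j: "j < dim_col (mat 1 1 (\<lambda>_. - s) :: 'a mat)"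
    have i': "i = 0" and j': "j = 0" using i j by auto
    have "(rowm n c * colm n (\<lambda>j. - bp j)) $$ (i,j) = (\<Sum>k<n. rowm n c $$ (i,k) * colm n (\<lambda>j. - bp j) $$ (k,j))"
      by (rule mult_entry[OF rowm_carrier colm_carrier]) (use i' j' in simp_all)
    also have "\<dots> = - s"
      by (simp add: colm_def rowm_def i' j' s_def sum_negf[symmetric])
    finally show "(rowm n c * colm n (\<lambda>j. - bp j) + mat 1 1 (\<lambda>_. 0) * 1\<^sub>m 1) $$ (i, j) = mat 1 1 (\<lambda>_. - s) $$ (i, j)"
      using i' j' by simp
  qed simp_all
  have "blk n A b c 0 * N = four_block_mat (A * 1\<^sub>m n + colm n b * 0\<^sub>m 1 n)
      (A * colm n (\<lambda>j. - bp j) + colm n b * 1\<^sub>m 1)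
      (rowm n c * 1\<^sub>m n + mat 1 1 (\<lambda>_. 0) * 0\<^sub>m 1 n)
      (rowm n c * colm n (\<lambda>j. - bp j) + mat 1 1 (\<lambda>_. 0) * 1\<^sub>m 1)"
    unfolding blk_def N_def by (rule mult_four_block_mat[OF A colm_carrier rowm_carrier mat_carrier
        one_carrier_mat colm_carrier zero_carrier_mat one_carrier_mat])
  also have "\<dots> = T" unfolding T_def g1 g2 g3 g4 ..
  finally have prod: "blk n A b c 0 * N = T" .
  have "det (blk n A b c 0) = det (blk n A b c 0 * N)"
    using det_mult[OF blk_carrier[OF A] Nc] detN by simp
  also have "\<dots> = det T" using prod by simp
  also have "\<dots> = det A * det (mat 1 1 (\<lambda>_. - s))" unfolding T_def
    by (rule det_four_block_mat_upper_right_zero[of _ n _ 1]) (use A in auto)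
  also have "\<dots> = - det A * s" by (subst det_single) auto
  finally show ?thesis unfolding s_def bp_def .
qed

definition Ssum :: "('a::{field,finite} \<Rightarrow> complex) \<Rightarrow> nat \<Rightarrow> 'a \<Rightarrow> complex" where
  "Ssum chi n x = (\<Sum>g \<in> carrier_mat n n. if det g = x then chi (mat_trace g) else 0)"

lemma inner_singular:
  fixes chi :: "'a::{field,finite} \<Rightarrow> complex"
  assumes ch: "additive_character chi" "nontrivial_character chi"
    and A: "A \<in> carrier_mat n n" and dA: "det A = 0"
  shows "(\<Sum>d\<in>UNIV. if det (blk n A b c d) = x then chi (mat_trace A + d) else 0) = 0"
proof -
  have "(\<Sum>d\<in>UNIV. if det (blk n A b c d) = x then chi (mat_trace A + d) else 0)
      = (\<Sum>d\<in>UNIV. if det (blk n A b c 0) = x then chi (mat_trace A) * chi d else 0)"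
  proof (rule sum.cong[OF refl])
    fix d
    have "det (blk n A b c d) = det (blk n A b c 0)" using blk_det_affine[OF A, of b c d] dA by simp
    then show "(if det (blk n A b c d) = x then chi (mat_trace A + d) else 0) =
      (if det (blk n A b c 0) = x then chi (mat_trace A) * chi d else 0)"
      by (simp add: chi_add[OF ch(1)])
  qed
  also have "\<dots> = (if det (blk n A b c 0) = x then chi (mat_trace A) * (\<Sum>d\<in>UNIV. chi d) else 0)"
    by (simp add: sum_distrib_left)
  also have "\<dots> = 0" using chi_sum_zero[OF ch] by simp
  finally show ?thesis .
qed

lemma inner_d:
  fixes chi :: "'a::{field,finite} \<Rightarrow> complex"
  assumes A: "A \<in> carrier_mat n n" and dA: "det A \<noteq> 0"
  shows "(\<Sum>d\<in>UNIV. if det (blk n A b c d) = x then chi (mat_trace A + d) else 0)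
     = chi (mat_trace A + (x - det (blk n A b c 0)) / det A)"
proof -
  let ?t = "(x - det (blk n A b c 0)) / det A"
  have "(\<Sum>d\<in>UNIV. if det (blk n A b c d) = x then chi (mat_trace A + d) else 0)
      = (\<Sum>d\<in>UNIV. if d = ?t then chi (mat_trace A + d) else 0)"
  proof (rule sum.cong[OF refl])
    fix d :: 'a
    have "(d = ?t) = (d * det A = x - det (blk n A b c 0))" using dA by (simp add: eq_divide_eq)
    also have "\<dots> = (det (blk n A b c 0) + d * det A = x)" by (simp add: eq_diff_eq add.commute)
    finally have "(det (blk n A b c d) = x) = (d = ?t)"
      using blk_det_affine[OF A, of b c d] by simp
    then show "(if det (blk n A b c d) = x then chi (mat_trace A + d) else 0)
      = (if d = ?t then chi (mat_trace A + d) else 0)" by simp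
  qed
  also have "\<dots> = chi (mat_trace A + ?t)" by simp
  finally show ?thesis .
qed

lemma card_PiE_univ: "card (Pi\<^sub>E {..<n} (\<lambda>_. UNIV :: 'a::finite set)) = card (UNIV :: 'a set) ^ n"
  by (simp add: card_PiE)

lemma inner_c:
  fixes chi :: "'a::{field,finite} \<Rightarrow> complex" and n :: nat and v :: "nat \<Rightarrow> 'a"
  assumes ch: "additive_character chi" "nontrivial_character chi"
  shows "(\<Sum>c\<in>Pi\<^sub>E {..<n} (\<lambda>_. UNIV). chi (\<Sum>j<n. c j * v j))
     = (if (\<forall>j<n. v j = 0) then of_nat (card (UNIV :: 'a set) ^ n) else 0)"
proof (cases "\<forall>j<n. v j = 0")
  case True
  then have "(\<Sum>c\<in>Pi\<^sub>E {..<n} (\<lambda>_. UNIV). chi (\<Sum>j<n. c j * v j))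
      = (\<Sum>c\<in>Pi\<^sub>E {..<n} (\<lambda>_. UNIV :: 'a set). 1)"
    by (intro sum.cong refl) (simp add: chi_zero[OF ch(1)])
  also have "\<dots> = of_nat (card (UNIV :: 'a set) ^ n)" by (simp add: card_PiE_univ)
  finally show ?thesis using True by simp
next
  case False
  then obtain j0 where j0: "j0 < n" "v j0 \<noteq> 0" by auto
  have "(\<Sum>c\<in>Pi\<^sub>E {..<n} (\<lambda>_. UNIV). chi (\<Sum>j<n. c j * v j)) = 0"
    by (rule chi_lin_sum_zero[OF ch j0(1)]) (rule j0(2))
  then show ?thesis using False by simp
qed

lemma inner_bc:
  fixes chi :: "'a::{field,finite} \<Rightarrow> complex"
  assumes ch: "additive_character chi" "nontrivial_character chi"
    and A: "A \<in> carrier_mat n n" and dA: "det A \<noteq> 0"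
  shows "(\<Sum>b\<in>Pi\<^sub>E {..<n} (\<lambda>_. UNIV). \<Sum>c\<in>Pi\<^sub>E {..<n} (\<lambda>_. UNIV). 
       \<Sum>d\<in>UNIV. if det (blk n A b c d) = x then chi (mat_trace A + d) else 0)
     = of_nat (card (UNIV :: 'a set) ^ n) * chi (mat_trace A + x / det A)"
proof -
  obtain Ai where Ai: "Ai \<in> carrier_mat n n" "A * Ai = 1\<^sub>m n" using inv_exists[OF A dA] by blast
  define bp where "bp b j = (\<Sum>l<n. Ai $$ (j,l) * b l)" for b :: "nat \<Rightarrow> 'a" and j
  define b0 where "b0 = (\<lambda>i\<in>{..<n}. (0::'a))"
  let ?K = "chi (mat_trace A + x / det A)"
  have step1: "(\<Sum>d\<in>UNIV. if det (blk n A b c d) = x then chi (mat_trace A + d) else 0)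
      = ?K * chi (\<Sum>j<n. c j * bp b j)" for b c
  proof -
    have "(x - det (blk n A b c 0)) / det A = x / det A + (\<Sum>j<n. c j * bp b j)"
      unfolding schur[OF A Ai(1) Ai(2)] bp_def using dA by (simp add: field_simps)
    then show ?thesis unfolding inner_d[OF A dA] by (simp add: chi_add[OF ch(1)] add.assoc)
  qed
  have bp0: "(\<forall>j<n. bp b j = 0) = (b = b0)" if b: "b \<in> Pi\<^sub>E {..<n} (\<lambda>_. UNIV)" for b
  proof
    assume z: "\<forall>j<n. bp b j = 0"
    show "b = b0"
    proof
      fix i show "b i = b0 i"
      proof (cases "i < n")
        case True
        have "b i = (\<Sum>k<n. A $$ (i,k) * bp b k)" unfolding bp_def by (rule A_bp[OF A Ai True, symmetric])
        also have "\<dots> = 0" using z by simp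
        finally show ?thesis using True by (simp add: b0_def)
      next
        case False then show ?thesis using b by (simp add: b0_def PiE_iff extensional_def)
      qed
    qed
  next
    assume "b = b0"
    then show "\<forall>j<n. bp b j = 0" by (simp add: bp_def b0_def)
  qed
  have "(\<Sum>b\<in>Pi\<^sub>E {..<n} (\<lambda>_. UNIV). \<Sum>c\<in>Pi\<^sub>E {..<n} (\<lambda>_. UNIV). 
       \<Sum>d\<in>UNIV. if det (blk n A b c d) = x then chi (mat_trace A + d) else 0)
     = (\<Sum>b\<in>Pi\<^sub>E {..<n} (\<lambda>_. UNIV). ?K * (\<Sum>c\<in>Pi\<^sub>E {..<n} (\<lambda>_. UNIV). chi (\<Sum>j<n. c j * bp b j)))"
    by (simp add: step1 sum_distrib_left)
  also have "\<dots> = (\<Sum>b\<in>Pi\<^sub>E {..<n} (\<lambda>_. UNIV). if b = b0 then ?K * of_nat (card (UNIV :: 'a set) ^ n) else 0)"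
  proof (rule sum.cong[OF refl])
    fix b assume b: "b \<in> Pi\<^sub>E {..<n} (\<lambda>_. UNIV :: 'a set)"
    show "?K * (\<Sum>c\<in>Pi\<^sub>E {..<n} (\<lambda>_. UNIV). chi (\<Sum>j<n. c j * bp b j))
        = (if b = b0 then ?K * of_nat (card (UNIV :: 'a set) ^ n) else 0)"
      unfolding inner_c[OF ch] bp0[OF b] by simp
  qed
  also have "\<dots> = ?K * of_nat (card (UNIV :: 'a set) ^ n)"
  proof -
    have "b0 \<in> Pi\<^sub>E {..<n} (\<lambda>_. UNIV :: 'a set)" by (simp add: b0_def)
    moreover have "finite (Pi\<^sub>E {..<n} (\<lambda>_. UNIV :: 'a set))" by (simp add: finite_PiE)
    ultimately show ?thesis by (simp only: sum.delta) simp
  qed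
  finally show ?thesis by (simp add: mult.commute)
qed

lemma sum_prod_split: "(\<Sum>a\<in>X \<times> R. f a) = (\<Sum>x\<in>X. \<Sum>r\<in>R. f (x,r))"
  by (subst sum.cartesian_product) simp

lemma sum_blkT: "(\<Sum>a\<in>blkT n. f a) = (\<Sum>A\<in>carrier_mat n n. \<Sum>b\<in>Pi\<^sub>E {..<n} (\<lambda>_. UNIV).
    \<Sum>c\<in>Pi\<^sub>E {..<n} (\<lambda>_. UNIV). \<Sum>d\<in>UNIV. f (A,b,c,d))"
  unfolding blkT_def sum_prod_split ..

lemma Ssum_step:
  fixes chi :: "'a::{field,finite} \<Rightarrow> complex"
  assumes ch: "additive_character chi" "nontrivial_character chi"
  shows "Ssum chi (Suc n) x = of_nat (card (UNIV::'a set) ^ n) * (\<Sum>y\<in>UNIV-{0}. chi (x / y) * Ssum chi n y)"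
proof -
  let ?G = "\<lambda>g. if det g = x then chi (mat_trace g) else 0"
  let ?q = "of_nat (card (UNIV::'a set) ^ n) :: complex"
  have "Ssum chi (Suc n) x = (\<Sum>a\<in>blkT n. ?G ((\<lambda>(A,b,c,d). blk n A b c d) a))"
    unfolding Ssum_def by (rule sum.reindex_bij_betw[OF blk_bij, symmetric])
  also have "\<dots> = (\<Sum>A\<in>carrier_mat n n. \<Sum>b\<in>Pi\<^sub>E {..<n} (\<lambda>_. UNIV).
    \<Sum>c\<in>Pi\<^sub>E {..<n} (\<lambda>_. UNIV). \<Sum>d\<in>UNIV. ?G (blk n A b c d))"
    unfolding sum_blkT prod.case ..
  also have "\<dots> = (\<Sum>A\<in>carrier_mat n n. if det A = 0 then 0 else ?q * chi (mat_trace A + x / det A))"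
  proof (rule sum.cong[OF refl])
    fix A :: "'a mat" assume A: "A \<in> carrier_mat n n"
    have G: "?G (blk n A b c d) = (if det (blk n A b c d) = x then chi (mat_trace A + d) else 0)"
      for b c :: "nat \<Rightarrow> 'a" and d :: 'a
      by (simp add: blk_trace[OF A])
    show "(\<Sum>b\<in>Pi\<^sub>E {..<n} (\<lambda>_. UNIV). \<Sum>c\<in>Pi\<^sub>E {..<n} (\<lambda>_. UNIV). \<Sum>d\<in>UNIV. ?G (blk n A b c d))
        = (if det A = 0 then 0 else ?q * chi (mat_trace A + x / det A))"
    proof (cases "det A = 0")
      case True
      then show ?thesis unfolding G using inner_singular[OF ch A True] by simp
    next
      case False
      then show ?thesis unfolding G using inner_bc[OF ch A False] by simp
    qed
  qed
  also have "\<dots> = ?q * (\<Sum>A\<in>carrier_mat n n. if det A = 0 then 0 else chi (x / det A) * chi (mat_trace A))"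
    unfolding sum_distrib_left
    by (rule sum.cong[OF refl]) (simp add: chi_add[OF ch(1)] mult.commute)
  also have "(\<Sum>A\<in>carrier_mat n n. if det A = 0 then 0 else chi (x / det A) * chi (mat_trace A))
      = (\<Sum>y\<in>UNIV-{0}. chi (x / y) * Ssum chi n y)"
  proof -
    have "(\<Sum>y\<in>UNIV-{0}. chi (x / y) * Ssum chi n y)
        = (\<Sum>y\<in>UNIV-{0}. \<Sum>A\<in>carrier_mat n n. if det A = y then chi (x / y) * chi (mat_trace A) else 0)"
      unfolding Ssum_def sum_distrib_left by (rule sum.cong[OF refl], rule sum.cong[OF refl]) simp
    also have "\<dots> = (\<Sum>A\<in>carrier_mat n n. \<Sum>y\<in>UNIV-{0}. if det A = y then chi (x / y) * chi (mat_trace A) else 0)"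
      by (rule sum.swap)
    also have "\<dots> = (\<Sum>A\<in>carrier_mat n n. if det A = 0 then 0 else chi (x / det A) * chi (mat_trace A))"
    proof (rule sum.cong[OF refl])
      fix A :: "'a mat"
      have "(\<Sum>y\<in>UNIV-{0}. if det A = y then chi (x / y) * chi (mat_trace A) else 0)
          = (if det A \<in> UNIV-{0} then chi (x / det A) * chi (mat_trace A) else 0)"
        by (rule sum.delta') simp
      then show "(\<Sum>y\<in>UNIV-{0}. if det A = y then chi (x / y) * chi (mat_trace A) else 0)
          = (if det A = 0 then 0 else chi (x / det A) * chi (mat_trace A))" by simp
    qed
    finally show ?thesis by simp
  qed
  finally show ?thesis .
qed

definition Kl :: "('a::field \<Rightarrow> complex) \<Rightarrow> nat \<Rightarrow> 'a \<Rightarrow> complex" where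
  "Kl chi m x = (\<Sum>\<alpha> \<in> Pi\<^sub>E {..<m} (\<lambda>_. UNIV - {0}). chi ((\<Sum>i<m. \<alpha> i) + x / (\<Prod>i<m. \<alpha> i)))"

lemma bij_mult_nz: assumes "(P::'a::field) \<noteq> 0"
  shows "bij_betw (\<lambda>z. z * P) (UNIV - {0}) (UNIV - {0})"
  by (rule bij_betw_byWitness[where f'="\<lambda>y. y / P"]) (use assms in auto)

lemma Kl_step:
  fixes chi :: "'a::{field,finite} \<Rightarrow> complex"
  assumes ch: "additive_character chi"
  shows "Kl chi (Suc m) x = (\<Sum>y\<in>UNIV-{0}. chi (x / y) * Kl chi m y)"
proof -
  let ?T = "\<lambda>_::nat. UNIV - {0::'a}"
  let ?F = "\<lambda>\<alpha>. chi ((\<Sum>i<Suc m. \<alpha> i) + x / (\<Prod>i<Suc m. \<alpha> i))"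
  have "Kl chi (Suc m) x = sum ?F (Pi\<^sub>E (insert m {..<m}) ?T)"
    unfolding Kl_def lessThan_Suc ..
  also have "\<dots> = sum ?F ((\<lambda>(y, g). g(m := y)) ` (?T m \<times> Pi\<^sub>E {..<m} ?T))"
    by (simp only: PiE_insert_eq)
  also have "\<dots> = (\<Sum>p\<in>?T m \<times> Pi\<^sub>E {..<m} ?T. ?F ((\<lambda>(y, g). g(m := y)) p))"
    by (rule sum.reindex[OF inj_combinator, unfolded comp_def]) simp
  also have "\<dots> = (\<Sum>z\<in>UNIV-{0}. \<Sum>g\<in>Pi\<^sub>E {..<m} ?T. ?F (g(m := z)))"
    unfolding sum_prod_split by simp
  also have "\<dots> = (\<Sum>z\<in>UNIV-{0}. \<Sum>g\<in>Pi\<^sub>E {..<m} ?T.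
       chi ((\<Sum>i<m. g i) + z + x / ((\<Prod>i<m. g i) * z)))"
  proof (rule sum.cong[OF refl], rule sum.cong[OF refl])
    fix z :: 'a and g :: "nat \<Rightarrow> 'a"
    have s: "(\<Sum>i<m. (g(m := z)) i) = (\<Sum>i<m. g i)" by (rule sum.cong) auto
    have p: "(\<Prod>i<m. (g(m := z)) i) = (\<Prod>i<m. g i)" by (rule prod.cong) auto
    show "?F (g(m := z)) = chi ((\<Sum>i<m. g i) + z + x / ((\<Prod>i<m. g i) * z))"
      by (simp add: s p)
  qed
  also have "\<dots> = (\<Sum>g\<in>Pi\<^sub>E {..<m} ?T. \<Sum>z\<in>UNIV-{0}.
       chi ((\<Sum>i<m. g i) + z + x / ((\<Prod>i<m. g i) * z)))"
    by (rule sum.swap)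
  also have "\<dots> = (\<Sum>g\<in>Pi\<^sub>E {..<m} ?T. \<Sum>y\<in>UNIV-{0}.
       chi (x / y) * chi ((\<Sum>i<m. g i) + y / (\<Prod>i<m. g i)))"
  proof (rule sum.cong[OF refl])
    fix g assume g: "g \<in> Pi\<^sub>E {..<m} ?T"
    define P where "P = (\<Prod>i<m. g i)"
    have P0: "P \<noteq> 0" unfolding P_def using g by (auto simp: PiE_iff)
    have "(\<Sum>y\<in>UNIV-{0}. chi (x / y) * chi ((\<Sum>i<m. g i) + y / P))
        = (\<Sum>z\<in>UNIV-{0}. chi (x / (z * P)) * chi ((\<Sum>i<m. g i) + z * P / P))"
      by (rule sum.reindex_bij_betw[OF bij_mult_nz[OF P0], symmetric])
    also have "\<dots> = (\<Sum>z\<in>UNIV-{0}. chi ((\<Sum>i<m. g i) + z + x / (P * z)))"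
    proof (rule sum.cong[OF refl])
      fix z :: 'a
      have "chi (x / (z * P)) * chi ((\<Sum>i<m. g i) + z * P / P) = chi ((\<Sum>i<m. g i) + z * P / P + x / (z * P))"
        by (simp add: chi_add[OF ch] mult.commute)
      also have "\<dots> = chi ((\<Sum>i<m. g i) + z + x / (P * z))" using P0 by (simp add: mult.commute)
      finally show "chi (x / (z * P)) * chi ((\<Sum>i<m. g i) + z * P / P) = chi ((\<Sum>i<m. g i) + z + x / (P * z))" .
    qed
    finally show "(\<Sum>z\<in>UNIV-{0}. chi ((\<Sum>i<m. g i) + z + x / ((\<Prod>i<m. g i) * z)))
        = (\<Sum>y\<in>UNIV-{0}. chi (x / y) * chi ((\<Sum>i<m. g i) + y / (\<Prod>i<m. g i)))"
      unfolding P_def by simp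
  qed
  also have "\<dots> = (\<Sum>y\<in>UNIV-{0}. \<Sum>g\<in>Pi\<^sub>E {..<m} ?T.
       chi (x / y) * chi ((\<Sum>i<m. g i) + y / (\<Prod>i<m. g i)))"
    by (rule sum.swap)
  also have "\<dots> = (\<Sum>y\<in>UNIV-{0}. chi (x / y) * Kl chi m y)"
    unfolding Kl_def sum_distrib_left ..
  finally show ?thesis .
qed

lemma carrier_mat_00: "carrier_mat 0 0 = {1\<^sub>m 0 :: 'a::semiring_1 mat}"
proof
  show "carrier_mat 0 0 \<subseteq> {1\<^sub>m 0 :: 'a mat}"
  proof
    fix g :: "'a mat" assume g: "g \<in> carrier_mat 0 0"
    have "g = 1\<^sub>m 0" by (rule eq_matI) (use g in auto)
    then show "g \<in> {1\<^sub>m 0}" by simp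
  qed
qed simp

lemma Ssum_0:
  fixes chi :: "'a::{field,finite} \<Rightarrow> complex"
  assumes ch: "additive_character chi"
  shows "Ssum chi 0 y = (if y = 1 then 1 else 0)"
proof -
  have tr: "mat_trace (1\<^sub>m 0 :: 'a mat) = 0" unfolding mat_trace_def by simp
  show ?thesis unfolding Ssum_def carrier_mat_00 using chi_zero[OF ch] tr by auto
qed

lemma Kl_0: "Kl chi 0 x = chi x"
  unfolding Kl_def by simp

lemma main_ind:
  fixes chi :: "'a::{field,finite} \<Rightarrow> complex"
  assumes ch: "additive_character chi" "nontrivial_character chi"
  shows "Ssum chi (Suc m) x = of_nat (card (UNIV :: 'a set) ^ (Suc m choose 2)) * Kl chi m x"
proof (induction m arbitrary: x)
  case 0
  have "Ssum chi (Suc 0) x = (\<Sum>y\<in>UNIV-{0}. chi (x / y) * (if y = 1 then 1 else 0))"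
    unfolding Ssum_step[OF ch] Ssum_0[OF ch(1)] by simp
  also have "\<dots> = (\<Sum>y\<in>UNIV-{0}. if y = 1 then chi (x / y) else 0)"
    by (rule sum.cong) auto
  also have "\<dots> = chi x" by (subst sum.delta) auto
  finally show ?case by (simp add: Kl_0 numeral_2_eq_2)
next
  case (Suc m)
  have c2: "(Suc (Suc m) choose 2) = Suc m + (Suc m choose 2)" by (simp add: numeral_2_eq_2)
  have "Ssum chi (Suc (Suc m)) x = of_nat (card (UNIV::'a set) ^ Suc m) *
      (\<Sum>y\<in>UNIV-{0}. chi (x / y) * (of_nat (card (UNIV :: 'a set) ^ (Suc m choose 2)) * Kl chi m y))"
    unfolding Ssum_step[OF ch, of "Suc m" x] Suc.IH ..
  also have "\<dots> = of_nat (card (UNIV::'a set) ^ Suc m) * of_nat (card (UNIV :: 'a set) ^ (Suc m choose 2)) *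
      (\<Sum>y\<in>UNIV-{0}. chi (x / y) * Kl chi m y)"
    by (simp add: sum_distrib_left algebra_simps)
  also have "\<dots> = of_nat (card (UNIV :: 'a set) ^ (Suc (Suc m) choose 2)) * Kl chi (Suc m) x"
    unfolding Kl_step[OF ch(1)] c2 by (simp add: power_add)
  finally show ?case .
qed

theorem mainTheorem5:
  fixes chi :: "'a::{field,finite} \<Rightarrow> complex" and n :: nat and x :: 'a
  assumes "n \<ge> 2"
    and "additive_character chi" and "nontrivial_character chi"
    and "x \<noteq> 0"
  shows "of_nat (card (UNIV :: 'a set) ^ (n choose 2)) *
           (\<Sum>\<alpha> \<in> Pi\<^sub>E {..<n-1} (\<lambda>_. UNIV - {0}).
              chi ((\<Sum>i<n-1. \<alpha> i) + x / (\<Prod>i<n-1. \<alpha> i)))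
       = (\<Sum>g \<in> {g \<in> carrier_mat n n. invertible_mat g \<and> det g = x}. chi (mat_trace g))"
proof -
  obtain m where n: "n = Suc m" using assms(1) by (cases n) auto
  have set_eq: "{g \<in> carrier_mat n n. invertible_mat g \<and> det g = x} = {g \<in> carrier_mat n n. det g = x}"
    using det_invertible assms(4) by blast
  have "(\<Sum>g \<in> {g \<in> carrier_mat n n. invertible_mat g \<and> det g = x}. chi (mat_trace g)) = Ssum chi n x"
    unfolding set_eq Ssum_def by (rule sum.inter_filter[OF finite_carrier_mat])
  also have "\<dots> = of_nat (card (UNIV :: 'a set) ^ (n choose 2)) * Kl chi (n-1) x"
    unfolding n using main_ind[OF assms(2,3)] by simp
  finally show ?thesis unfolding Kl_def by simp
qed

end
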